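(* Consider the discrete Motsch–Tadmor model (as in the context) with initial data satisfying $\|\Delta^x(0)\|_F<M$ and $\|\Delta^v(0)\|_F<\kappa\int_{\|\Delta^x(0)\|_F}^M\psi(s)\,ds$, and let $C\in(0,1)$. Then for all sufficiently small $h>0$, the solution $(X(n),V(n))_{n\ge0}$ with time-step $h$ has the property that for every $i\in\{1,\dots,N\}$ the limit $v_i^\infty:=\lim_{n\to\infty}v_i(n)$ exists, $\|v_i^\infty\|<\infty$, and for all $n\ge0$ \[ \|v_i^\infty-v_i(n)\|\le\frac{h\kappa\sqrt{N}\,\|\Delta^v(0)\|_F\,e^{-C\kappa\psi(M)hn}}{1-e^{-C\kappa\psi(M)h}} . \]
   Context: Discrete MT model: fix $N\ge1$, $d\ge1$, $\kappa>0$, $h>0$, and $a:[0,\infty)\to\mathbb{R}$ with constants $0<c_1\le c_2$, $c_1\le a\le c_2$, $|a(r_1)-a(r_2)|\le L_a|r_1-r_2|$ ($L_a>0$); $0<h<\min\{1,1/\kappa\}$. A solution satisfies $x_i(n+1)=x_i(n)+hv_i(n)$, $v_i(n+1)=v_i(n)+h\kappa\sum_j\phi_{ij}(n)(v_j(n)-v_i(n))$, $\phi_{ij}(n)=\frac{a(\|x_i(n)-x_j(n)\|)}{\sum_ka(\|x_i(n)-x_k(n)\|)}$, $x_i(n),v_i(n)\in\mathbb{R}^d$. Notation: $\|\Delta^x(n)\|_F=(\sum_{i,j}\|x_i(n)-x_j(n)\|^2)^{1/2}$, $\|\Delta^v(n)\|_F=(\sum_{i,j}\|v_i(n)-v_j(n)\|^2)^{1/2}$;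 $\|\phi\|_{\mathrm{Lip}}=\frac{L_a}{Nc_1}(1+\frac{c_2}{c_1})$, $M=\frac{1}{4N\|\phi\|_{\mathrm{Lip}}}$, $\psi(s)=1-\|\phi\|_{\mathrm{Lip}}Ns$. *)

theory Defs
  imports "HOL-Analysis.Analysis"
begin

text \<open>Agents are indexed by i < N (i.e. 0..N-1 instead of 1..N); positions and velocities
live in an arbitrary Euclidean space 'v (dimension d = DIM('v) \<ge> 1).
x i n, v i n denote x_i(n), v_i(n).\<close>

definition MT_phi :: "nat \<Rightarrow> (real \<Rightarrow> real) \<Rightarrow> (nat \<Rightarrow> nat \<Rightarrow> 'v::euclidean_space) \<Rightarrow> nat \<Rightarrow> nat \<Rightarrow> nat \<Rightarrow> real" where
  "MT_phi N a x i j n = a (norm (x i n - x j n)) / (\<Sum>k<N. a (norm (x i n - x k n)))"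

definition MT_solution :: "nat \<Rightarrow> real \<Rightarrow> (real \<Rightarrow> real) \<Rightarrow> real \<Rightarrow>
    (nat \<Rightarrow> nat \<Rightarrow> 'v::euclidean_space) \<Rightarrow> (nat \<Rightarrow> nat \<Rightarrow> 'v) \<Rightarrow> bool" where
  "MT_solution N \<kappa> a h x v \<longleftrightarrow>
     (\<forall>n i. i < N \<longrightarrow>
        x i (Suc n) = x i n + h *\<^sub>R v i n \<and>
        v i (Suc n) = v i n + (h * \<kappa>) *\<^sub>R (\<Sum>j<N. MT_phi N a x i j n *\<^sub>R (v j n - v i n)))"

definition frob_diff :: "nat \<Rightarrow> (nat \<Rightarrow> 'v::euclidean_space) \<Rightarrow> real" where
  "frob_diff N y = sqrt (\<Sum>i<N. \<Sum>j<N. (norm (y i - y j))\<^sup>2)"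

definition phi_Lip :: "nat \<Rightarrow> real \<Rightarrow> real \<Rightarrow> real \<Rightarrow> real" where
  "phi_Lip N L_a c1 c2 = L_a / (real N * c1) * (1 + c2 / c1)"

definition M_const :: "nat \<Rightarrow> real \<Rightarrow> real \<Rightarrow> real \<Rightarrow> real" where
  "M_const N L_a c1 c2 = 1 / (4 * real N * phi_Lip N L_a c1 c2)"

definition psi_fun :: "nat \<Rightarrow> real \<Rightarrow> real \<Rightarrow> real \<Rightarrow> real \<Rightarrow> real" where
  "psi_fun N L_a c1 c2 s = 1 - phi_Lip N L_a c1 c2 * real N * s"

end

theory Submission
  imports Defs
begin


lemma comb_bound:
  fixes w :: "nat \<Rightarrow> 'v::real_normed_vector" and c :: "nat \<Rightarrow> real"
  assumes c0: "(\<Sum>j<N. c j) = 0" and wD: "\<forall>j<N. \<forall>l<N. norm (w j - w l) \<le> D"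
  shows "norm (\<Sum>j<N. c j *\<^sub>R w j) \<le> (\<Sum>j<N. \<bar>c j\<bar>) / 2 * D"
proof -
  define p where "p j = max (c j) 0" for j
  define q where "q j = max (- c j) 0" for j
  have cpq: "c j = p j - q j" for j unfolding p_def q_def by auto
  have apq: "\<bar>c j\<bar> = p j + q j" for j unfolding p_def q_def by auto
  have p0: "p j \<ge> 0" and q0: "q j \<ge> 0" for j unfolding p_def q_def by auto
  define s where "s = (\<Sum>j<N. p j)"
  have sq: "(\<Sum>j<N. q j) = s" using c0 unfolding s_def cpq by (simp add: sum_subtractf)
  have abs_s: "(\<Sum>j<N. \<bar>c j\<bar>) = 2 * s" unfolding apq using sq by (simp add: sum.distrib s_def)
  have s0: "s \<ge> 0" unfolding s_def using p0 by (simp add: sum_nonneg)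
  have ident: "s *\<^sub>R (\<Sum>j<N. c j *\<^sub>R w j) = (\<Sum>j<N. \<Sum>l<N. (p j * q l) *\<^sub>R (w j - w l))"
  proof -
    have "(\<Sum>j<N. \<Sum>l<N. (p j * q l) *\<^sub>R (w j - w l))
        = (\<Sum>j<N. \<Sum>l<N. (p j * q l) *\<^sub>R w j) - (\<Sum>j<N. \<Sum>l<N. (p j * q l) *\<^sub>R w l)"
      by (simp add: scaleR_right_diff_distrib sum_subtractf)
    also have "(\<Sum>j<N. \<Sum>l<N. (p j * q l) *\<^sub>R w j) = (\<Sum>j<N. (p j * s) *\<^sub>R w j)"
      by (simp add: scaleR_sum_left[symmetric] sum_distrib_left[symmetric] sq)
    also have "(\<Sum>j<N. \<Sum>l<N. (p j * q l) *\<^sub>R w l) = (\<Sum>l<N. (s * q l) *\<^sub>R w l)"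
      by (subst sum.swap) (simp add: scaleR_sum_left[symmetric] sum_distrib_right[symmetric] s_def)
    finally show ?thesis
      by (simp add: cpq scaleR_sum_right scaleR_left_diff_distrib sum_subtractf algebra_simps)
  qed
  have "norm (\<Sum>j<N. \<Sum>l<N. (p j * q l) *\<^sub>R (w j - w l)) \<le> (\<Sum>j<N. \<Sum>l<N. (p j * q l) * D)"
  proof -
    have "norm (\<Sum>j<N. \<Sum>l<N. (p j * q l) *\<^sub>R (w j - w l)) \<le> (\<Sum>j<N. norm (\<Sum>l<N. (p j * q l) *\<^sub>R (w j - w l)))"
      by (rule norm_sum)
    also have "\<dots> \<le> (\<Sum>j<N. \<Sum>l<N. norm ((p j * q l) *\<^sub>R (w j - w l)))"
      by (intro sum_mono norm_sum)
    also have "\<dots> \<le> (\<Sum>j<N. \<Sum>l<N. (p j * q l) * D)"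
      using wD p0 q0 by (intro sum_mono) (simp add: mult_left_mono)
    finally show ?thesis .
  qed
  also have "(\<Sum>j<N. \<Sum>l<N. (p j * q l) * D) = s * s * D"
    by (simp add: sum_distrib_left[symmetric] sum_distrib_right[symmetric] sq s_def)
  finally have key0: "norm (s *\<^sub>R (\<Sum>j<N. c j *\<^sub>R w j)) \<le> s * s * D"
    using ident by simp
  have key: "s * norm (\<Sum>j<N. c j *\<^sub>R w j) \<le> s * (s * D)"
    using key0 s0 by (simp add: mult.assoc)
  show ?thesis
  proof (cases "s = 0")
    case True
    then have "\<forall>j\<in>{..<N}. p j = 0" using p0 unfolding s_def by (simp add: sum_nonneg_eq_0_iff)
    moreover have "\<forall>j\<in>{..<N}. q j = 0" using True sq q0 by (simp add: sum_nonneg_eq_0_iff)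
    ultimately have "\<forall>j\<in>{..<N}. c j = 0" using cpq by simp
    then show ?thesis by simp
  next
    case False
    then have "norm (\<Sum>j<N. c j *\<^sub>R w j) \<le> s * D" using key s0 by simp
    then show ?thesis using abs_s by simp
  qed
qed


lemma phi_basic:
  fixes x :: "nat \<Rightarrow> nat \<Rightarrow> 'v::euclidean_space"
  assumes N1: "N \<ge> 1" and c1: "0 < c1" and abH: "\<forall>r. r \<ge> 0 \<longrightarrow> c1 \<le> a r \<and> a r \<le> c2"
    and i: "i < N"
  shows "(\<Sum>j<N. MT_phi N a x i j n) = 1" and "\<And>j. MT_phi N a x i j n \<ge> 0"
    and "(\<Sum>k<N. a (norm (x i n - x k n))) \<ge> real N * c1"
proof -
  have ab: "\<And>r. r \<ge> 0 \<Longrightarrow> c1 \<le> a r \<and> a r \<le> c2" using abH by auto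
  have S: "(\<Sum>k<N. a (norm (x i n - x k n))) \<ge> (\<Sum>k<N. c1)"
    using ab by (intro sum_mono) auto
  then show "(\<Sum>k<N. a (norm (x i n - x k n))) \<ge> real N * c1" by simp
  have pos: "(\<Sum>k<N. a (norm (x i n - x k n))) > 0"
  proof -
    have "real N * c1 > 0" using N1 c1 by simp
    then show ?thesis using S by simp
  qed
  show "(\<Sum>j<N. MT_phi N a x i j n) = 1"
    unfolding MT_phi_def using pos by (simp add: sum_divide_distrib[symmetric])
  show "MT_phi N a x i j n \<ge> 0" for j
  proof -
    have "a (norm (x i n - x j n)) \<ge> 0" using ab[of "norm (x i n - x j n)"] c1 by simp
    then show ?thesis unfolding MT_phi_def using pos by simp
  qed
qed

lemma phi_lip:
  fixes x :: "nat \<Rightarrow> nat \<Rightarrow> 'v::euclidean_space"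
  assumes N1: "N \<ge> 1" and c1: "0 < c1" and c12: "c1 \<le> c2" and La: "L_a > 0"
    and abH: "\<forall>r. r \<ge> 0 \<longrightarrow> c1 \<le> a r \<and> a r \<le> c2"
    and alH: "\<forall>r1 r2. r1 \<ge> 0 \<longrightarrow> r2 \<ge> 0 \<longrightarrow> \<bar>a r1 - a r2\<bar> \<le> L_a * \<bar>r1 - r2\<bar>"
    and i: "i < N" and k: "k < N"
  shows "\<bar>MT_phi N a x i j n - MT_phi N a x k j n\<bar> \<le> phi_Lip N L_a c1 c2 * norm (x i n - x k n)"
proof -
  have ab: "\<And>r. r \<ge> 0 \<Longrightarrow> c1 \<le> a r \<and> a r \<le> c2" using abH by auto
  have al: "\<And>r1 r2. r1 \<ge> 0 \<Longrightarrow> r2 \<ge> 0 \<Longrightarrow> \<bar>a r1 - a r2\<bar> \<le> L_a * \<bar>r1 - r2\<bar>" using alH by auto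
  define d where "d = norm (x i n - x k n)"
  define Si where "Si = (\<Sum>l<N. a (norm (x i n - x l n)))"
  define Sk where "Sk = (\<Sum>l<N. a (norm (x k n - x l n)))"
  define A where "A = a (norm (x i n - x j n))"
  define B where "B = a (norm (x k n - x j n))"
  have Nc: "real N * c1 > 0" using N1 c1 by simp
  have Si: "Si \<ge> real N * c1" unfolding Si_def proof - have "(\<Sum>l<N. a (norm (x i n - x l n))) \<ge> (\<Sum>l<N. c1)" using ab by (intro sum_mono) auto then show "(\<Sum>l<N. a (norm (x i n - x l n))) \<ge> real N * c1" by simp qed
  have Sk: "Sk \<ge> real N * c1" unfolding Sk_def proof - have "(\<Sum>l<N. a (norm (x k n - x l n))) \<ge> (\<Sum>l<N. c1)" using ab by (intro sum_mono) auto then show "(\<Sum>l<N. a (norm (x k n - x l n))) \<ge> real N * c1" by simp qed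
  have d0: "d \<ge> 0" unfolding d_def by simp
  have adiff: "\<bar>a (norm (x i n - x l n)) - a (norm (x k n - x l n))\<bar> \<le> L_a * d" for l
  proof -
    have "\<bar>a (norm (x i n - x l n)) - a (norm (x k n - x l n))\<bar> \<le> L_a * \<bar>norm (x i n - x l n) - norm (x k n - x l n)\<bar>"
      by (rule al) auto
    also have "\<bar>norm (x i n - x l n) - norm (x k n - x l n)\<bar> \<le> norm ((x i n - x l n) - (x k n - x l n))"
      by (rule norm_triangle_ineq3)
    also have "(x i n - x l n) - (x k n - x l n) = x i n - x k n" by simp
    finally show ?thesis using La unfolding d_def by simp
  qed
  have AB: "\<bar>A - B\<bar> \<le> L_a * d" unfolding A_def B_def by (rule adiff)
  have SS: "\<bar>Sk - Si\<bar> \<le> real N * (L_a * d)"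
  proof -
    have "\<bar>Sk - Si\<bar> = \<bar>\<Sum>l<N. a (norm (x i n - x l n)) - a (norm (x k n - x l n))\<bar>"
      unfolding Si_def Sk_def by (simp add: sum_subtractf abs_minus_commute)
    also have "\<dots> \<le> (\<Sum>l<N. \<bar>a (norm (x i n - x l n)) - a (norm (x k n - x l n))\<bar>)"
      by (rule sum_abs)
    also have "\<dots> \<le> (\<Sum>l<N. L_a * d)" by (intro sum_mono adiff)
    finally show ?thesis by simp
  qed
  have B0: "0 \<le> B" "B \<le> c2" unfolding B_def using ab[of "norm (x k n - x j n)"] c1 by auto
  have Sipos: "Si > 0" and Skpos: "Sk > 0" using Si Sk Nc by auto
  have eq: "MT_phi N a x i j n - MT_phi N a x k j n = (A - B) / Si + B * (Sk - Si) / (Si * Sk)"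
    unfolding MT_phi_def A_def B_def Si_def[symmetric] Sk_def[symmetric] using Sipos Skpos
    by (simp add: field_simps)
  have t1: "\<bar>(A - B) / Si\<bar> \<le> L_a * d / (real N * c1)"
  proof -
    have "\<bar>(A - B) / Si\<bar> = \<bar>A - B\<bar> / Si" using Sipos by simp
    also have "\<dots> \<le> L_a * d / Si" using AB Sipos by (simp add: divide_right_mono)
    also have "\<dots> \<le> L_a * d / (real N * c1)" using Si Nc La d0
      by (intro divide_left_mono) auto
    finally show ?thesis .
  qed
  have t2: "\<bar>B * (Sk - Si) / (Si * Sk)\<bar> \<le> c2 * (real N * (L_a * d)) / ((real N * c1) * (real N * c1))"
  proof -
    have "\<bar>B * (Sk - Si) / (Si * Sk)\<bar> = B * \<bar>Sk - Si\<bar> / (Si * Sk)" using Sipos Skpos B0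
      by (simp add: abs_mult)
    also have "\<dots> \<le> c2 * (real N * (L_a * d)) / (Si * Sk)" using Sipos Skpos B0 SS
      by (intro divide_right_mono mult_mono) auto
    also have "\<dots> \<le> c2 * (real N * (L_a * d)) / ((real N * c1) * (real N * c1))"
      using Si Sk Nc La d0 B0 c12 c1 N1 Sipos Skpos
      by (intro divide_left_mono mult_mono mult_nonneg_nonneg mult_pos_pos) auto
    finally show ?thesis .
  qed
  have "\<bar>MT_phi N a x i j n - MT_phi N a x k j n\<bar> \<le> L_a * d / (real N * c1) + c2 * (real N * (L_a * d)) / ((real N * c1) * (real N * c1))"
    unfolding eq using t1 t2 by linarith
  also have "\<dots> = phi_Lip N L_a c1 c2 * d"
    unfolding phi_Lip_def using N1 c1 by (simp add: field_simps power2_eq_square)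
  finally show ?thesis unfolding d_def .
qed


lemma Lip_pos: "N \<ge> 1 \<Longrightarrow> 0 < c1 \<Longrightarrow> c1 \<le> c2 \<Longrightarrow> L_a > 0 \<Longrightarrow> phi_Lip N L_a c1 c2 > 0"
  unfolding phi_Lip_def by (intro mult_pos_pos divide_pos_pos add_pos_pos) auto

lemma LipM: "N \<ge> 1 \<Longrightarrow> 0 < c1 \<Longrightarrow> c1 \<le> c2 \<Longrightarrow> L_a > 0 \<Longrightarrow>
   phi_Lip N L_a c1 c2 * real N * M_const N L_a c1 c2 = 1/4"
  using Lip_pos[of N c1 c2 L_a] unfolding M_const_def by simp

lemma Mpos: "N \<ge> 1 \<Longrightarrow> 0 < c1 \<Longrightarrow> c1 \<le> c2 \<Longrightarrow> L_a > 0 \<Longrightarrow> M_const N L_a c1 c2 > 0"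
  using Lip_pos[of N c1 c2 L_a] unfolding M_const_def by simp


lemma step:
  fixes x v :: "nat \<Rightarrow> nat \<Rightarrow> 'v::euclidean_space"
  assumes sol: "MT_solution N \<kappa> a h x v"
    and N1: "N \<ge> 1" and c1: "0 < c1" and c12: "c1 \<le> c2" and La: "L_a > 0"
    and ab: "\<forall>r. r \<ge> 0 \<longrightarrow> c1 \<le> a r \<and> a r \<le> c2"
    and al: "\<forall>r1 r2. r1 \<ge> 0 \<longrightarrow> r2 \<ge> 0 \<longrightarrow> \<bar>a r1 - a r2\<bar> \<le> L_a * \<bar>r1 - r2\<bar>"
    and h0: "0 < h" and hk: "h * \<kappa> < 1" and k0: "\<kappa> > 0"
    and vD: "\<forall>i<N. \<forall>k<N. norm (v i n - v k n) \<le> D"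
    and xM: "\<forall>i<N. \<forall>k<N. norm (x i n - x k n) \<le> 2 * M_const N L_a c1 c2"
  shows "\<forall>i<N. \<forall>k<N. norm (v i (Suc n) - v k (Suc n)) \<le> (1 - 3/4 * (h * \<kappa>)) * D"
    and "\<forall>i<N. norm (v i (Suc n) - v i n) \<le> h * \<kappa> * D"
proof -
  have D0: "D \<ge> 0"
  proof -
    have "0 < N" using N1 by simp
    then have "norm (v 0 n - v 0 n) \<le> D" using vD by blast
    then show ?thesis by simp
  qed
  have hk0: "h * \<kappa> > 0" using h0 k0 by simp
  define P where "P i = (\<Sum>j<N. MT_phi N a x i j n *\<^sub>R v j n)" for i
  have sumeq: "(\<Sum>j<N. MT_phi N a x i j n *\<^sub>R (v j n - v i n)) = P i - v i n" if i: "i < N" for i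
  proof -
    have "(\<Sum>j<N. MT_phi N a x i j n *\<^sub>R (v j n - v i n))
        = P i - (\<Sum>j<N. MT_phi N a x i j n) *\<^sub>R v i n"
      unfolding P_def by (simp add: scaleR_right_diff_distrib sum_subtractf scaleR_sum_left)
    moreover have "(\<Sum>j<N. MT_phi N a x i j n) = 1" by (rule phi_basic(1)[OF N1 c1 ab i, where x=x and n=n])
    ultimately show ?thesis by simp
  qed
  have vs: "v i (Suc n) = v i n + (h * \<kappa>) *\<^sub>R (P i - v i n)" if "i < N" for i
    using sol that sumeq[OF that] unfolding MT_solution_def by auto
  show "\<forall>i<N. \<forall>k<N. norm (v i (Suc n) - v k (Suc n)) \<le> (1 - 3/4 * (h * \<kappa>)) * D"
  proof (intro allI impI)
    fix i k assume i: "i < N" and k: "k < N"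
    define c where "c j = MT_phi N a x i j n - MT_phi N a x k j n" for j
    have Pc: "P i - P k = (\<Sum>j<N. c j *\<^sub>R v j n)"
      unfolding P_def c_def by (simp add: scaleR_left_diff_distrib sum_subtractf)
    have c0: "(\<Sum>j<N. c j) = 0"
      unfolding c_def using phi_basic(1)[OF N1 c1 ab i, where x=x and n=n] phi_basic(1)[OF N1 c1 ab k, where x=x and n=n]
      by (simp add: sum_subtractf)
    have cb: "\<bar>c j\<bar> \<le> phi_Lip N L_a c1 c2 * (2 * M_const N L_a c1 c2)" for j
    proof -
      have "\<bar>c j\<bar> \<le> phi_Lip N L_a c1 c2 * norm (x i n - x k n)"
        unfolding c_def by (rule phi_lip[OF N1 c1 c12 La ab al i k])
      also have "\<dots> \<le> phi_Lip N L_a c1 c2 * (2 * M_const N L_a c1 c2)"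
        using xM i k Lip_pos[OF N1 c1 c12 La] by (intro mult_left_mono) auto
      finally show ?thesis .
    qed
    have "(\<Sum>j<N. \<bar>c j\<bar>) \<le> (\<Sum>j<N. phi_Lip N L_a c1 c2 * (2 * M_const N L_a c1 c2))"
      by (intro sum_mono cb)
    also have "\<dots> = 2 * (phi_Lip N L_a c1 c2 * real N * M_const N L_a c1 c2)" by simp
    also have "\<dots> = 1/2" using LipM[OF N1 c1 c12 La] by simp
    finally have sc: "(\<Sum>j<N. \<bar>c j\<bar>) \<le> 1/2" .
    have "norm (P i - P k) \<le> (\<Sum>j<N. \<bar>c j\<bar>) / 2 * D"
      unfolding Pc by (rule comb_bound[OF c0]) (use vD in auto)
    also have "\<dots> \<le> 1/4 * D" using sc D0 by (intro mult_right_mono) auto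
    finally have nP: "norm (P i - P k) \<le> 1/4 * D" .
    have "v i (Suc n) - v k (Suc n) = (1 - h * \<kappa>) *\<^sub>R (v i n - v k n) + (h * \<kappa>) *\<^sub>R (P i - P k)"
      using vs[OF i] vs[OF k] by (simp add: algebra_simps)
    then have "norm (v i (Suc n) - v k (Suc n)) \<le> norm ((1 - h * \<kappa>) *\<^sub>R (v i n - v k n)) + norm ((h * \<kappa>) *\<^sub>R (P i - P k))"
      by (metis norm_triangle_ineq)
    also have "\<dots> = (1 - h * \<kappa>) * norm (v i n - v k n) + (h * \<kappa>) * norm (P i - P k)"
      using hk hk0 by simp
    also have "\<dots> \<le> (1 - h * \<kappa>) * D + (h * \<kappa>) * (1/4 * D)"
      using hk hk0 vD i k nP by (intro add_mono mult_left_mono) auto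
    also have "\<dots> = (1 - 3/4 * (h * \<kappa>)) * D" by (simp add: algebra_simps)
    finally show "norm (v i (Suc n) - v k (Suc n)) \<le> (1 - 3/4 * (h * \<kappa>)) * D" .
  qed
  show "\<forall>i<N. norm (v i (Suc n) - v i n) \<le> h * \<kappa> * D"
  proof (intro allI impI)
    fix i assume i: "i < N"
    have "v i (Suc n) - v i n = (h * \<kappa>) *\<^sub>R (\<Sum>j<N. MT_phi N a x i j n *\<^sub>R (v j n - v i n))"
      using sol i unfolding MT_solution_def by auto
    then have e: "norm (v i (Suc n) - v i n) = (h * \<kappa>) * norm (\<Sum>j<N. MT_phi N a x i j n *\<^sub>R (v j n - v i n))"
      using hk0 by simp
    have "norm (\<Sum>j<N. MT_phi N a x i j n *\<^sub>R (v j n - v i n)) \<le> (\<Sum>j<N. norm (MT_phi N a x i j n *\<^sub>R (v j n - v i n)))"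
      by (rule norm_sum)
    also have "\<dots> \<le> (\<Sum>j<N. MT_phi N a x i j n * D)"
      using phi_basic(2)[OF N1 c1 ab i, where x=x and n=n] vD i by (intro sum_mono) (simp add: mult_left_mono)
    also have "\<dots> = D" using phi_basic(1)[OF N1 c1 ab i, where x=x and n=n] by (simp add: sum_distrib_right[symmetric])
    finally have "norm (\<Sum>j<N. MT_phi N a x i j n *\<^sub>R (v j n - v i n)) \<le> D" .
    then show "norm (v i (Suc n) - v i n) \<le> h * \<kappa> * D" unfolding e using hk0 by (simp add: mult_left_mono)
  qed
qed


lemma tail_bound:
  fixes u :: "nat \<Rightarrow> 'v::banach"
  assumes inc: "\<And>k. norm (u (Suc k) - u k) \<le> B * q ^ k" and q0: "0 \<le> q" and q1: "q < 1"
  shows "\<exists>L. u \<longlonglongrightarrow> L \<and> (\<forall>n. norm (L - u n) \<le> B * q ^ n / (1 - q))"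
proof -
  define d where "d k = u (Suc k) - u k" for k
  have gs: "summable (\<lambda>k. B * q ^ k)" using q0 q1 by (intro summable_mult summable_geometric) simp
  have ds: "summable d" by (rule summable_comparison_test'[OF gs]) (use inc in \<open>simp add: d_def\<close>)
  have dns: "summable (\<lambda>k. norm (d k))" by (rule summable_comparison_test'[OF gs]) (use inc in \<open>simp add: d_def\<close>)
  have useq: "u n = u 0 + (\<Sum>k<n. d k)" for n unfolding d_def sum_lessThan_telescope by simp
  have lim: "u \<longlonglongrightarrow> u 0 + suminf d"
  proof -
    have "(\<lambda>n. u 0 + (\<Sum>k<n. d k)) \<longlonglongrightarrow> u 0 + suminf d"
      by (intro tendsto_add tendsto_const summable_LIMSEQ ds)
    moreover have "(\<lambda>n. u 0 + (\<Sum>k<n. d k)) = u" by (rule ext) (rule useq[symmetric])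
    ultimately show ?thesis by simp
  qed
  show ?thesis
  proof (intro exI conjI allI)
    show "u \<longlonglongrightarrow> u 0 + suminf d" by (rule lim)
    fix n
    have "u 0 + suminf d - u n = (\<Sum>k. d (k + n))"
      using suminf_minus_initial_segment[OF ds, of n] useq[of n] by simp
    then have "norm (u 0 + suminf d - u n) = norm (\<Sum>k. d (k + n))" by simp
    also have "\<dots> \<le> (\<Sum>k. norm (d (k + n)))"
      by (rule summable_norm) (use dns summable_iff_shift[of "\<lambda>k. norm (d k)" n] in simp)
    also have "\<dots> \<le> (\<Sum>k. B * q ^ n * q ^ k)"
    proof (rule suminf_le)
      show "norm (d (k + n)) \<le> B * q ^ n * q ^ k" for k
        using inc[of "k + n"] by (simp add: d_def power_add mult_ac)
      show "summable (\<lambda>k. norm (d (k + n)))" using dns summable_iff_shift[of "\<lambda>k. norm (d k)" n] by simp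
      show "summable (\<lambda>k. B * q ^ n * q ^ k)" using q0 q1 by (intro summable_mult summable_geometric) simp
    qed
    also have "\<dots> = B * q ^ n / (1 - q)"
      using suminf_mult[of "\<lambda>k. q ^ k" "B * q ^ n"] suminf_geometric[of q] q0 q1 summable_geometric[of q]
      by simp
    finally show "norm (u 0 + suminf d - u n) \<le> B * q ^ n / (1 - q)" .
  qed
qed


lemma pair_le_frob:
  fixes y :: "nat \<Rightarrow> 'v::euclidean_space"
  assumes "i < N" "k < N"
  shows "norm (y i - y k) \<le> frob_diff N y"
proof -
  have "(norm (y i - y k))\<^sup>2 \<le> (\<Sum>j<N. (norm (y i - y j))\<^sup>2)"
    using assms by (intro member_le_sum[where f="\<lambda>j. (norm (y i - y j))\<^sup>2"]) auto
  also have "\<dots> \<le> (\<Sum>i<N. \<Sum>j<N. (norm (y i - y j))\<^sup>2)"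
    using assms by (intro member_le_sum[where f="\<lambda>i. \<Sum>j<N. (norm (y i - y j))\<^sup>2"]) (auto intro: sum_nonneg)
  finally show ?thesis unfolding frob_diff_def by (simp add: real_le_rsqrt)
qed

lemma frob_nonneg: "frob_diff N y \<ge> 0"
  unfolding frob_diff_def by (simp add: sum_nonneg)

theorem corollary3p5:
  fixes N :: nat and \<kappa> c1 c2 L_a C :: real and a :: "real \<Rightarrow> real"
    and x0 v0 :: "nat \<Rightarrow> 'v::euclidean_space"
  assumes "N \<ge> 1" and "\<kappa> > 0" and "0 < c1" and "c1 \<le> c2" and "L_a > 0"
    and "\<And>r. r \<ge> 0 \<Longrightarrow> c1 \<le> a r \<and> a r \<le> c2"
    and "\<And>r1 r2. r1 \<ge> 0 \<Longrightarrow> r2 \<ge> 0 \<Longrightarrow> \<bar>a r1 - a r2\<bar> \<le> L_a * \<bar>r1 - r2\<bar>"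
    and "frob_diff N x0 < M_const N L_a c1 c2"
    and "frob_diff N v0 < \<kappa> * integral {frob_diff N x0 .. M_const N L_a c1 c2} (psi_fun N L_a c1 c2)"
    and "0 < C" and "C < 1"
  shows "\<exists>h0>0. \<forall>h x v. 0 < h \<and> h < h0 \<and> h < 1 \<and> h < 1 / \<kappa> \<and>
           MT_solution N \<kappa> a h x v \<and> (\<forall>i<N. x i 0 = x0 i \<and> v i 0 = v0 i) \<longrightarrow>
           (\<forall>i<N. \<exists>vinf. (\<lambda>n. v i n) \<longlonglongrightarrow> vinf \<and>
              (\<forall>n. norm (vinf - v i n) \<le>
                 h * \<kappa> * sqrt (real N) * frob_diff N v0
                   * exp (- C * \<kappa> * psi_fun N L_a c1 c2 (M_const N L_a c1 c2) * h * real n)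
                 / (1 - exp (- C * \<kappa> * psi_fun N L_a c1 c2 (M_const N L_a c1 c2) * h))))"
proof -
  note N1 = assms(1) and k0 = assms(2) and c1 = assms(3) and c12 = assms(4) and La = assms(5)
  have ab: "\<forall>r. r \<ge> 0 \<longrightarrow> c1 \<le> a r \<and> a r \<le> c2" using assms(6) by blast
  have al: "\<forall>r1 r2. r1 \<ge> 0 \<longrightarrow> r2 \<ge> 0 \<longrightarrow> \<bar>a r1 - a r2\<bar> \<le> L_a * \<bar>r1 - r2\<bar>" using assms(7) by blast
  define M where "M = M_const N L_a c1 c2"
  define Lp where "Lp = phi_Lip N L_a c1 c2"
  define X0 where "X0 = frob_diff N x0"
  define V0 where "V0 = frob_diff N v0"
  have Mp: "M > 0" unfolding M_def by (rule Mpos[OF N1 c1 c12 La])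
  have Lpp: "Lp > 0" unfolding Lp_def by (rule Lip_pos[OF N1 c1 c12 La])
  have LNM: "Lp * real N * M = 1/4" unfolding Lp_def M_def by (rule LipM[OF N1 c1 c12 La])
  have psiM: "psi_fun N L_a c1 c2 (M_const N L_a c1 c2) = 3/4"
    unfolding psi_fun_def using LNM unfolding Lp_def M_def by simp
  have X00: "X0 \<ge> 0" and V00: "V0 \<ge> 0" unfolding X0_def V0_def by (rule frob_nonneg)+
  have XM: "X0 < M" using assms(8) unfolding X0_def M_def .
  have int_le: "integral {X0..M} (psi_fun N L_a c1 c2) \<le> M - X0"
  proof -
    have cont: "continuous_on {X0..M} (psi_fun N L_a c1 c2)"
      unfolding psi_fun_def by (intro continuous_intros)
    have "integral {X0..M} (psi_fun N L_a c1 c2) \<le> integral {X0..M} (\<lambda>_. 1::real)"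
    proof (rule integral_le)
      show "psi_fun N L_a c1 c2 integrable_on {X0..M}" by (rule integrable_continuous_interval[OF cont])
      show "(\<lambda>_. 1::real) integrable_on {X0..M}" by (rule integrable_const_ivl)
      fix s assume "s \<in> {X0..M}"
      then have "s \<ge> 0" using X00 by simp
      then show "psi_fun N L_a c1 c2 s \<le> 1"
        unfolding psi_fun_def using Lpp unfolding Lp_def by simp
    qed
    also have "\<dots> = M - X0" using XM by simp
    finally show ?thesis .
  qed
  have VX: "V0 < \<kappa> * (M - X0)"
  proof -
    have "V0 < \<kappa> * integral {X0..M} (psi_fun N L_a c1 c2)" using assms(9) unfolding V0_def X0_def M_def .
    also have "\<dots> \<le> \<kappa> * (M - X0)" using int_le k0 by (simp add: mult_left_mono)
    finally show ?thesis .
  qed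
  have bnd: "X0 + 4 / (3 * \<kappa>) * V0 \<le> 2 * M"
  proof -
    have "4 / (3 * \<kappa>) * V0 \<le> 4 / (3 * \<kappa>) * (\<kappa> * (M - X0))"
      using VX k0 by (intro mult_left_mono) auto
    also have "\<dots> = 4/3 * (M - X0)" using k0 by simp
    finally show ?thesis using X00 Mp by simp
  qed
  show ?thesis
  proof (intro exI[of _ 1] conjI allI impI)
    show "(0::real) < 1" by simp
    fix h and x v :: "nat \<Rightarrow> nat \<Rightarrow> 'v"
    assume H: "0 < h \<and> h < 1 \<and> h < 1 \<and> h < 1 / \<kappa> \<and> MT_solution N \<kappa> a h x v \<and> (\<forall>i<N. x i 0 = x0 i \<and> v i 0 = v0 i)"
    then have h0: "0 < h" and hk1: "h * \<kappa> < 1" and sol: "MT_solution N \<kappa> a h x v"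
      and init: "\<forall>i<N. x i 0 = x0 i \<and> v i 0 = v0 i"
      using k0 by (auto simp: field_simps)
    have hk0: "h * \<kappa> > 0" using h0 k0 by simp
    define q where "q = 1 - 3/4 * (h * \<kappa>)"
    have q0: "0 \<le> q" and q1: "q < 1" unfolding q_def using hk0 hk1 by auto
    define Inv where "Inv n \<longleftrightarrow> (\<forall>i<N. \<forall>k<N. norm (v i n - v k n) \<le> q ^ n * V0) \<and>
        (\<forall>i<N. \<forall>k<N. norm (x i n - x k n) \<le> X0 + 4 / (3 * \<kappa>) * V0 * (1 - q ^ n))" for n
    have inv: "Inv n" for n
    proof (induction n)
      case 0
      show ?case unfolding Inv_def using init pair_le_frob[where y=x0 and N=N] pair_le_frob[where y=v0 and N=N]
        unfolding X0_def V0_def by simp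
    next
      case (Suc n)
      then have vD: "\<forall>i<N. \<forall>k<N. norm (v i n - v k n) \<le> q ^ n * V0"
        and xD: "\<forall>i<N. \<forall>k<N. norm (x i n - x k n) \<le> X0 + 4 / (3 * \<kappa>) * V0 * (1 - q ^ n)"
        unfolding Inv_def by auto
      have qn: "0 \<le> q ^ n" "q ^ n \<le> 1" using q0 q1 by (auto simp: power_le_one)
      have "X0 + 4 / (3 * \<kappa>) * V0 * (1 - q ^ n) \<le> X0 + 4 / (3 * \<kappa>) * V0"
        using qn V00 k0 by (intro add_left_mono mult_left_le) auto
      then have xM: "\<forall>i<N. \<forall>k<N. norm (x i n - x k n) \<le> 2 * M_const N L_a c1 c2"
        using xD bnd unfolding M_def by force
      have vS: "\<forall>i<N. \<forall>k<N. norm (v i (Suc n) - v k (Suc n)) \<le> (1 - 3/4 * (h * \<kappa>)) * (q ^ n * V0)"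
        by (rule step(1)[OF sol N1 c1 c12 La ab al h0 hk1 k0 vD xM])
      have part1: "\<forall>i<N. \<forall>k<N. norm (v i (Suc n) - v k (Suc n)) \<le> q ^ Suc n * V0"
        using vS unfolding q_def by (simp add: mult_ac)
      have part2: "norm (x i (Suc n) - x k (Suc n)) \<le> X0 + 4 / (3 * \<kappa>) * V0 * (1 - q ^ Suc n)"
        if i: "i < N" and k: "k < N" for i k
      proof -
        have "x i (Suc n) - x k (Suc n) = (x i n - x k n) + h *\<^sub>R (v i n - v k n)"
          using sol i k unfolding MT_solution_def by (simp add: algebra_simps)
        then have "norm (x i (Suc n) - x k (Suc n)) \<le> norm (x i n - x k n) + h * norm (v i n - v k n)"
          using h0 by (metis abs_of_pos norm_scaleR norm_triangle_ineq)
        also have "\<dots> \<le> X0 + 4 / (3 * \<kappa>) * V0 * (1 - q ^ n) + h * (q ^ n * V0)"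
          using xD vD i k h0 by (intro add_mono mult_left_mono) auto
        also have "\<dots> = X0 + 4 / (3 * \<kappa>) * V0 * (1 - q ^ Suc n)"
          unfolding q_def using k0 by (simp add: field_simps)
        finally show ?thesis .
      qed
      show ?case unfolding Inv_def using part1 part2 by blast
    qed
      fix i assume i: "i < N"
      have incr: "norm (v i (Suc k) - v i k) \<le> (h * \<kappa> * V0) * q ^ k" for k
      proof -
        have vD: "\<forall>i<N. \<forall>k'<N. norm (v i k - v k' k) \<le> q ^ k * V0"
          and xD: "\<forall>i<N. \<forall>k'<N. norm (x i k - x k' k) \<le> X0 + 4 / (3 * \<kappa>) * V0 * (1 - q ^ k)"
          using inv[of k] unfolding Inv_def by auto
        have qn: "0 \<le> q ^ k" "q ^ k \<le> 1" using q0 q1 by (auto simp: power_le_one)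
        have "X0 + 4 / (3 * \<kappa>) * V0 * (1 - q ^ k) \<le> X0 + 4 / (3 * \<kappa>) * V0"
          using qn V00 k0 by (intro add_left_mono mult_left_le) auto
        then have xM: "\<forall>i<N. \<forall>k'<N. norm (x i k - x k' k) \<le> 2 * M_const N L_a c1 c2"
          using xD bnd unfolding M_def by force
        show ?thesis using step(2)[OF sol N1 c1 c12 La ab al h0 hk1 k0 vD xM] i by (simp add: mult_ac)
      qed
      obtain L where L: "(\<lambda>n. v i n) \<longlonglongrightarrow> L" and Lb: "\<forall>n. norm (L - v i n) \<le> (h * \<kappa> * V0) * q ^ n / (1 - q)"
        using tail_bound[of "\<lambda>n. v i n", OF incr q0 q1] by blast
      define r where "r = C * \<kappa> * (3/4) * h"
      have r0: "r > 0" unfolding r_def using assms(10) k0 h0 by simp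
      have rq: "r < 1 - q"
      proof -
        have m: "C * (h * \<kappa>) < 1 * (h * \<kappa>)" by (rule mult_strict_right_mono[OF assms(11) hk0])
        have "r = 3/4 * (C * (h * \<kappa>))" unfolding r_def by (simp add: mult_ac)
        moreover have "1 - q = 3/4 * (h * \<kappa>)" unfolding q_def by simp
        ultimately show ?thesis using m by linarith
      qed
      have e1: "1 - exp (- r) \<le> r" using exp_ge_add_one_self[of "- r"] by simp
      have e2: "1 - exp (- r) > 0" using r0 by simp
      have qe: "q \<le> exp (- r)"
      proof -
        have "q \<le> exp (- (3/4 * (h * \<kappa>)))" unfolding q_def using exp_ge_add_one_self[of "- (3/4 * (h * \<kappa>))"] by simp
        also have "\<dots> \<le> exp (- r)" using rq unfolding q_def by simp
        finally show ?thesis .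
      qed
      show "\<exists>vinf. (\<lambda>n. v i n) \<longlonglongrightarrow> vinf \<and>
              (\<forall>n. norm (vinf - v i n) \<le>
                 h * \<kappa> * sqrt (real N) * frob_diff N v0
                   * exp (- C * \<kappa> * psi_fun N L_a c1 c2 (M_const N L_a c1 c2) * h * real n)
                 / (1 - exp (- C * \<kappa> * psi_fun N L_a c1 c2 (M_const N L_a c1 c2) * h)))"
      proof (intro exI conjI allI)
        show "(\<lambda>n. v i n) \<longlonglongrightarrow> L" by (rule L)
        fix n
        have ex1: "exp (- C * \<kappa> * psi_fun N L_a c1 c2 (M_const N L_a c1 c2) * h * real n) = exp (- r) ^ n"
          unfolding psiM r_def by (simp add: exp_of_nat_mult[symmetric] mult_ac)
        have ex2: "exp (- C * \<kappa> * psi_fun N L_a c1 c2 (M_const N L_a c1 c2) * h) = exp (- r)"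
          unfolding psiM r_def by (simp add: mult_ac)
        have qpow: "q ^ n \<le> exp (- r) ^ n" using q0 qe by (intro power_mono) auto
        have frac: "q ^ n / (1 - q) \<le> exp (- r) ^ n / (1 - exp (- r))"
          using qpow e1 e2 rq by (intro frac_le) auto
        have sN: "sqrt (real N) \<ge> 1" using N1 by simp
        have hkV: "h * \<kappa> * V0 \<ge> 0" using hk0 V00 by simp
        have "norm (L - v i n) \<le> (h * \<kappa> * V0) * (q ^ n / (1 - q))" using Lb by simp
        also have "\<dots> \<le> (h * \<kappa> * V0) * (exp (- r) ^ n / (1 - exp (- r)))"
          using frac hkV by (rule mult_left_mono)
        also have "\<dots> \<le> (h * \<kappa> * sqrt (real N) * V0) * (exp (- r) ^ n / (1 - exp (- r)))"
        proof (rule mult_right_mono)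
          show "h * \<kappa> * V0 \<le> h * \<kappa> * sqrt (real N) * V0"
            using sN hkV by (metis mult.right_neutral mult_left_mono mult.assoc mult.commute)
          show "0 \<le> exp (- r) ^ n / (1 - exp (- r))" using e2 by simp
        qed
        finally show "norm (L - v i n) \<le>
                 h * \<kappa> * sqrt (real N) * frob_diff N v0
                   * exp (- C * \<kappa> * psi_fun N L_a c1 c2 (M_const N L_a c1 c2) * h * real n)
                 / (1 - exp (- C * \<kappa> * psi_fun N L_a c1 c2 (M_const N L_a c1 c2) * h))"
          unfolding ex1 ex2 V0_def by simp
      qed
  qed
qed

end
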